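(* Let $S$ be an optimal $n$-town. Then the centers of all rows of $S$ of odd cardinality lie on a common vertical grid line $V_o$ (a line $x=a$ with $a\in\mathbb{Z}$), and the centers of all rows of $S$ of even cardinality lie on a common vertical line $V_e$ at distance $\frac12$ from $V_o$. Similarly, the centers of all columns of odd cardinality lie on a common horizontal grid line $H_o$, and the centers of all columns of even cardinality lie on a common horizontal line $H_e$ at distance $\frac12$ from $H_o$. Moreover, without changing its cost, $S$ can be moved by a translation and a rotation by a multiple of $90^\circ$ so that $H_o$ becomes the $x$-axis, $V_o$ becomes the $y$-axis, and $H_e$ and $V_e$ lie in the negative half-planes (i.e., $H_e$ is the line $y=-\frac12$ and $V_e$ is the line $x=-\frac12$).
   Context: An $n$-town is a set $S\subset\mathbb{Z}\times\mathbb{Z}$ of exactly $n$ distinct grid points; its cost is $c(S)=\frac12\sum_{s\in S}\sum_{t\in S}\|s-t\|_1$ (Manhattan distance), and it is optimal if its cost is minimum among all $n$-towns. For $i\in\mathbb{Z}$, the $i$-th column of $S$ is $C_i=\{(i,y)\in S: y\in\mathbb{Z}\}$ and the $i$-th row is $R_i=\{(x,i)\in S: x\in\mathbb{Z}\}$. The length of a row or column is its cardinality. The center of a nonempty row is the point midway between its leftmost and rightmost points; the center of a nonempty column is the point midway between its lowest and highest points. *)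

theory Defs
  imports Complex_Main
begin

type_synonym point = "int \<times> int"

definition l1dist :: "point \<Rightarrow> point \<Rightarrow> int" where
  "l1dist s t = \<bar>fst s - fst t\<bar> + \<bar>snd s - snd t\<bar>"

definition town :: "nat \<Rightarrow> point set \<Rightarrow> bool" where
  "town n S \<longleftrightarrow> finite S \<and> card S = n"

definition cost :: "point set \<Rightarrow> real" where
  "cost S = (1/2) * (\<Sum>s\<in>S. \<Sum>t\<in>S. real_of_int (l1dist s t))"

definition optimal :: "nat \<Rightarrow> point set \<Rightarrow> bool" where
  "optimal n S \<longleftrightarrow> town n S \<and> (\<forall>T. town n T \<longrightarrow> cost S \<le> cost T)"

definition row :: "point set \<Rightarrow> int \<Rightarrow> point set" where
  "row S i = {p \<in> S. snd p = i}"

definition col :: "point set \<Rightarrow> int \<Rightarrow> point set" where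
  "col S i = {p \<in> S. fst p = i}"

definition row_center_x :: "point set \<Rightarrow> int \<Rightarrow> real" where
  "row_center_x S i = (real_of_int (Min (fst ` row S i)) + real_of_int (Max (fst ` row S i))) / 2"

definition col_center_y :: "point set \<Rightarrow> int \<Rightarrow> real" where
  "col_center_y S i = (real_of_int (Min (snd ` col S i)) + real_of_int (Max (snd ` col S i))) / 2"

definition rot90 :: "point \<Rightarrow> point" where
  "rot90 p = (- snd p, fst p)"

end

theory Submission
  imports Defs
begin

definition D :: "int set \<Rightarrow> int set \<Rightarrow> int" where
  "D A B = (\<Sum>a\<in>A. \<Sum>b\<in>B. \<bar>a - b\<bar>)"

definition I :: "nat \<Rightarrow> int set" where
  "I p = {- (int p div 2) .. int p - 1 - int p div 2}"

definition G :: "nat \<Rightarrow> nat \<Rightarrow> int" where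
  "G p q = D (I p) (I q)"

lemma D_sym: "D A B = D B A"
  unfolding D_def by (subst sum.swap) (simp add: abs_minus_commute)

lemma D_empty[simp]: "D A {} = 0" "D {} B = 0"
  unfolding D_def by auto

lemma G_sym: "G p q = G q p" unfolding G_def by (rule D_sym)

lemma I_card[simp]: "card (I p) = p"
  unfolding I_def by simp

lemma I_mono: "q \<le> p \<Longrightarrow> I q \<subseteq> I p"
  unfolding I_def by auto

lemma I_strip:
  assumes "2 \<le> p"
  shows "I p = insert (- (int p div 2)) (insert (int p - 1 - int p div 2) (I (p-2)))"
    and "- (int p div 2) \<notin> insert (int p - 1 - int p div 2) (I (p-2))"
    and "int p - 1 - int p div 2 \<notin> I (p-2)"
proof -
  have e: "int (p-2) div 2 = int p div 2 - 1" using assms by (simp add: of_nat_diff)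
  show "I p = insert (- (int p div 2)) (insert (int p - 1 - int p div 2) (I (p-2)))"
    unfolding I_def e using assms by (auto simp: of_nat_diff)
  show "- (int p div 2) \<notin> insert (int p - 1 - int p div 2) (I (p-2))"
    unfolding I_def e using assms by (auto simp: of_nat_diff)
  show "int p - 1 - int p div 2 \<notin> I (p-2)"
    unfolding I_def e using assms by (auto simp: of_nat_diff)
qed

lemma D_insert: "finite A \<Longrightarrow> a \<notin> A \<Longrightarrow> D (insert a A) B = (\<Sum>b\<in>B. \<bar>a - b\<bar>) + D A B"
  unfolding D_def by simp

lemma G_rec:
  assumes "2 \<le> p" "q \<le> p"
  shows "G p q = G (p-2) q + int q * (int p - 1)"
proof -
  let ?l = "- (int p div 2)" and ?h = "int p - 1 - int p div 2"
  have "G p q = (\<Sum>b\<in>I q. \<bar>?l - b\<bar>) + ((\<Sum>b\<in>I q. \<bar>?h - b\<bar>) + G (p-2) q)"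
    unfolding G_def I_strip(1)[OF assms(1)]
    using I_strip(2,3)[OF assms(1)] by (simp add: D_insert I_def)
  also have "\<dots> = (\<Sum>b\<in>I q. \<bar>?l - b\<bar> + \<bar>?h - b\<bar>) + G (p-2) q"
    by (simp add: sum.distrib)
  also have "(\<Sum>b\<in>I q. \<bar>?l - b\<bar> + \<bar>?h - b\<bar>) = (\<Sum>b\<in>I q. int p - 1)"
  proof (rule sum.cong)
    fix b assume "b \<in> I q"
    then have "b \<in> I p" using I_mono[OF assms(2)] by auto
    then show "\<bar>?l - b\<bar> + \<bar>?h - b\<bar> = int p - 1" unfolding I_def by auto
  qed simp
  finally show ?thesis by simp
qed

lemma span_ge:
  assumes "finite A" "A \<noteq> {}"
  shows "int (card A) - 1 \<le> Max A - Min A"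
proof -
  have "A \<subseteq> {Min A..Max A}" using assms by auto
  then have "card A \<le> card {Min A..Max A}" by (rule card_mono[rotated]) simp
  moreover have "Min A \<le> Max A" using assms by simp
  ultimately show ?thesis by simp
qed

lemma span_eq:
  assumes "finite A" "A \<noteq> {}" "Max A - Min A = int (card A) - 1"
  shows "A = {Min A..Max A}"
proof -
  have s: "A \<subseteq> {Min A..Max A}" using assms by auto
  have "Min A \<le> Max A" using assms by simp
  then have "card A = card {Min A..Max A}" using assms(3) by simp
  then show ?thesis using card_subset_eq[OF _ s] by simp
qed

lemma Min_ivl[simp]: "(l::int) \<le> u \<Longrightarrow> Min {l..u} = l"
  by (rule Min_eqI) auto
lemma Max_ivl[simp]: "(l::int) \<le> u \<Longrightarrow> Max {l..u} = u"
  by (rule Max_eqI) auto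

definition P :: "int set \<Rightarrow> int set \<Rightarrow> bool" where
  "P A B \<longleftrightarrow> (A \<noteq> {} \<and> B \<noteq> {} \<longrightarrow> \<bar>Min A + Max A - Min B - Max B\<bar> \<le> 1) \<and>
     (card B \<le> card A \<and> B \<noteq> {} \<longrightarrow> Max A - Min A = int (card A) - 1) \<and>
     (card A \<le> card B \<and> A \<noteq> {} \<longrightarrow> Max B - Min B = int (card B) - 1)"

lemma P_sym: "P A B = P B A"
  unfolding P_def by (auto simp: abs_minus_commute)

definition Q :: "int set \<Rightarrow> int set \<Rightarrow> bool" where
  "Q A B \<longleftrightarrow> G (card A) (card B) \<le> D A B \<and> (D A B = G (card A) (card B) \<longrightarrow> P A B)"

lemma Q_sym: "Q A B = Q B A"
  unfolding Q_def by (simp add: D_sym[of A B] G_sym[of "card A"] P_sym[of A B])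

lemma Q_half:
  assumes IH: "\<And>A' B'. finite A' \<Longrightarrow> finite B' \<Longrightarrow> card A' + card B' < card A + card B \<Longrightarrow> Q A' B'"
    and fA: "finite A" and fB: "finite B" and le: "card B \<le> card A"
  shows "Q A B"
proof (cases "card A \<le> 1")
  case True
  show ?thesis
  proof (cases "card A = 0")
    case True
    then have "A = {}" "B = {}" using fA fB le by auto
    then show ?thesis unfolding Q_def P_def G_def I_def by simp
  next
    case False
    have "card A = 1" using False \<open>card A \<le> 1\<close> by simp
    then obtain a where A: "A = {a}" by (rule card_1_singletonE)
    show ?thesis
    proof (cases "B = {}")
      case True
      then show ?thesis unfolding Q_def P_def G_def I_def using A by simp
    next
      case False
      have "card B \<noteq> 0" using False fB by simp
      then have "card B = 1" using le A by simp
      then obtain b where B: "B = {b}" by (rule card_1_singletonE)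
      have "I 1 = {0}" unfolding I_def by simp
      then have "G 1 1 = 0" unfolding G_def D_def by simp
      then show ?thesis unfolding Q_def P_def using A B by (simp add: D_def)
    qed
  qed
next
  case False
  define p where "p = card A"
  define q where "q = card B"
  have p2: "2 \<le> p" using False p_def by simp
  have Ane: "A \<noteq> {}" using p2 p_def by auto
  define m where "m = Min A"
  define M where "M = Max A"
  have mA: "m \<in> A" and MA: "M \<in> A" using fA Ane m_def M_def by auto
  have span: "int p - 1 \<le> M - m" using span_ge[OF fA Ane] p_def m_def M_def by simp
  then have mM: "m \<noteq> M" using p2 by simp
  define A' where "A' = A - {m, M}"
  have fA': "finite A'" using fA A'_def by simp
  have cA': "card A' = p - 2" using fA mA MA mM A'_def p_def by (simp add: card_Diff_subset)
  have Aeq: "A = insert m (insert M A')" using mA MA A'_def by auto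
  have DA: "D A B = D A' B + (\<Sum>b\<in>B. \<bar>m - b\<bar> + \<bar>M - b\<bar>)"
    unfolding Aeq using fA' mM by (simp add: D_insert A'_def sum.distrib)
  define E where "E = (\<Sum>b\<in>B. \<bar>m - b\<bar> + \<bar>M - b\<bar>)"
  have E1: "(\<Sum>b\<in>B. M - m) \<le> E" unfolding E_def by (rule sum_mono) auto
  have E2: "int q * (M - m) \<le> E" using E1 q_def by simp
  have E3: "int q * (int p - 1) \<le> int q * (M - m)" using span by (simp add: mult_left_mono)
  have QA': "Q A' B" using IH[OF fA' fB] cA' p_def p2 by simp
  have Grec: "G p q = G (p-2) q + int q * (int p - 1)"
    using G_rec p2 le p_def q_def by simp
  have ge: "G p q \<le> D A B" using QA' cA' DA E2 E3 Grec unfolding Q_def E_def q_def by simp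
  have "P A B" if eq: "D A B = G p q"
  proof -
    have eq1: "D A' B = G (p-2) q" and eq2: "E = int q * (int p - 1)"
      using eq QA' cA' DA E2 E3 Grec unfolding Q_def E_def q_def by simp_all
    have PA': "P A' B" using QA' eq1 cA' unfolding Q_def q_def by simp
    show "P A B"
    proof (cases "B = {}")
      case True
      then show ?thesis unfolding P_def using p2 p_def by simp
    next
      case Bne: False
      have qpos: "0 < q" using Bne fB q_def by auto
      have Mm: "M - m = int p - 1"
      proof -
        have "int q * (M - m) \<le> int q * (int p - 1)" using E2 eq2 by simp
        then have "M - m \<le> int p - 1" using qpos by simp
        then show ?thesis using span by simp
      qed
      have Aivl: "A = {m..M}" using span_eq[OF fA Ane] Mm p_def m_def M_def by simp
      have "(\<Sum>b\<in>B. \<bar>m - b\<bar> + \<bar>M - b\<bar> - (M - m)) = 0"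
        using eq2 Mm q_def unfolding E_def by (simp add: sum_subtractf)
      then have "\<forall>b\<in>B. \<bar>m - b\<bar> + \<bar>M - b\<bar> - (M - m) = 0"
        using fB by (subst sum_nonneg_eq_0_iff[symmetric]) auto
      then have Bsub: "B \<subseteq> {m..M}"
      proof (intro subsetI)
        fix b assume "\<forall>b\<in>B. \<bar>m - b\<bar> + \<bar>M - b\<bar> - (M - m) = 0" "b \<in> B"
        then have "\<bar>m - b\<bar> + \<bar>M - b\<bar> - (M - m) = 0" by blast
        then show "b \<in> {m..M}" by (simp add: abs_if split: if_splits)
      qed
      have c2: "Max A - Min A = int (card A) - 1" using Mm m_def M_def p_def by simp
      have c3: "Max B - Min B = int (card B) - 1" if "card A \<le> card B"
      proof -
        have "card B = card {m..M}" using that le Aivl by simp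
        then have Bi: "B = {m..M}" using card_subset_eq[OF _ Bsub] by simp
        have "m \<le> M" using Mm p2 by simp
        then show ?thesis using Bi Mm by simp
      qed
      have c1: "\<bar>Min A + Max A - Min B - Max B\<bar> \<le> 1"
      proof (cases "p = 2")
        case True
        then have "M = m + 1" using Mm by simp
        moreover have "Min B \<in> {m..M}" "Max B \<in> {m..M}" using Bsub Bne fB Min_in Max_in by blast+
        ultimately show ?thesis using m_def M_def by auto
      next
        case False
        then have p3: "3 \<le> p" using p2 by simp
        have A'ivl: "A' = {m+1..M-1}" using Aivl A'_def by auto
        have "m + 1 \<le> M - 1" using Mm p3 by simp
        then have "Min A' = m + 1" "Max A' = M - 1" "A' \<noteq> {}" using A'ivl by auto
        then show ?thesis using PA' Bne unfolding P_def m_def M_def by auto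
      qed
      show ?thesis unfolding P_def using c1 c2 c3 by auto
    qed
  qed
  then show ?thesis unfolding Q_def using ge p_def q_def by simp
qed

lemma Q_all: "finite A \<Longrightarrow> finite B \<Longrightarrow> Q A B"
proof (induction "card A + card B" arbitrary: A B rule: less_induct)
  case less
  show ?case
  proof (cases "card B \<le> card A")
    case True
    then show ?thesis using Q_half less by blast
  next
    case False
    have "Q B A" using Q_half[of B A] less False by (simp add: add.commute)
    then show ?thesis using Q_sym by simp
  qed
qed


definition W :: "point set \<Rightarrow> int" where
  "W S = (\<Sum>s\<in>S. \<Sum>t\<in>S. l1dist s t)"

lemma cost_W: "cost S = (1/2) * real_of_int (W S)"
  unfolding cost_def W_def by (simp add: of_int_sum)

lemma row_finite[simp]: "finite S \<Longrightarrow> finite (row S i)"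
  unfolding row_def by simp

lemma inj_fst_row: "inj_on fst (row S i)"
  unfolding row_def inj_on_def by (auto simp: prod_eq_iff)

lemma sum_rows: "finite S \<Longrightarrow> (\<Sum>s\<in>S. g s) = (\<Sum>i\<in>snd`S. \<Sum>s\<in>row S i. g s)"
  unfolding row_def by (rule sum.group[symmetric]) auto

lemma card_rows: "finite S \<Longrightarrow> card S = (\<Sum>i\<in>snd`S. card (row S i))"
  using sum_rows[of S "\<lambda>_. 1::nat"] by simp

lemma W_decomp:
  assumes fS: "finite S"
  shows "W S = (\<Sum>i\<in>snd`S. \<Sum>j\<in>snd`S. D (fst`row S i) (fst`row S j)
              + int (card (row S i)) * int (card (row S j)) * \<bar>i - j\<bar>)"
proof -
  have "W S = (\<Sum>s\<in>S. \<Sum>j\<in>snd`S. \<Sum>t\<in>row S j. l1dist s t)"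
    unfolding W_def by (rule sum.cong[OF refl], rule sum_rows[OF fS])
  also have "\<dots> = (\<Sum>j\<in>snd`S. \<Sum>s\<in>S. \<Sum>t\<in>row S j. l1dist s t)"
    by (rule sum.swap)
  also have "\<dots> = (\<Sum>j\<in>snd`S. \<Sum>i\<in>snd`S. \<Sum>s\<in>row S i. \<Sum>t\<in>row S j. l1dist s t)"
    by (rule sum.cong[OF refl], rule sum_rows[OF fS])
  also have "\<dots> = (\<Sum>i\<in>snd`S. \<Sum>j\<in>snd`S. \<Sum>s\<in>row S i. \<Sum>t\<in>row S j. l1dist s t)"
    by (rule sum.swap)
  also have "\<dots> = (\<Sum>i\<in>snd`S. \<Sum>j\<in>snd`S. D (fst`row S i) (fst`row S j)
              + int (card (row S i)) * int (card (row S j)) * \<bar>i - j\<bar>)"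
  proof (intro sum.cong refl)
    fix i j
    have "(\<Sum>s\<in>row S i. \<Sum>t\<in>row S j. l1dist s t)
        = (\<Sum>s\<in>row S i. \<Sum>t\<in>row S j. \<bar>fst s - fst t\<bar> + \<bar>i - j\<bar>)"
      by (intro sum.cong refl) (auto simp: row_def l1dist_def)
    also have "\<dots> = (\<Sum>s\<in>row S i. \<Sum>t\<in>row S j. \<bar>fst s - fst t\<bar>)
        + int (card (row S i)) * int (card (row S j)) * \<bar>i - j\<bar>"
      by (simp add: sum.distrib)
    also have "(\<Sum>s\<in>row S i. \<Sum>t\<in>row S j. \<bar>fst s - fst t\<bar>) = D (fst`row S i) (fst`row S j)"
      unfolding D_def
      by (simp add: sum.reindex[OF inj_fst_row])
    finally show "(\<Sum>s\<in>row S i. \<Sum>t\<in>row S j. l1dist s t) = D (fst`row S i) (fst`row S j)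
              + int (card (row S i)) * int (card (row S j)) * \<bar>i - j\<bar>" .
  qed
  finally show ?thesis .
qed

lemma I_nonempty: "0 < p \<Longrightarrow> I p \<noteq> {}"
  using I_card[of p] by (metis card.empty less_irrefl)

lemma I_finite[simp]: "finite (I p)" unfolding I_def by simp

lemma rows_tight:
  assumes opt: "optimal n S" and i: "i \<in> snd`S" and j: "j \<in> snd`S"
  shows "P (fst`row S i) (fst`row S j)"
proof -
  have fS: "finite S" and cS: "card S = n" using opt unfolding optimal_def town_def by auto
  define Y where "Y = snd`S"
  define Pn where "Pn i = card (row S i)" for i
  define T where "T = (\<Union>i\<in>Y. (\<lambda>x. (x,i)) ` I (Pn i))"
  have Ppos: "0 < Pn i" if "i \<in> Y" for i
    using that fS unfolding Pn_def Y_def row_def by (auto simp: card_gt_0_iff)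
  have fT: "finite T" unfolding T_def Y_def using fS by simp
  have rowT: "row T i = (\<lambda>x. (x,i)) ` I (Pn i)" if "i \<in> Y" for i
    using that unfolding T_def row_def by auto
  have YT: "snd`T = Y"
  proof
    show "snd`T \<subseteq> Y" unfolding T_def by auto
    show "Y \<subseteq> snd`T"
    proof
      fix i assume "i \<in> Y"
      then obtain x where "x \<in> I (Pn i)" using I_nonempty[OF Ppos] by blast
      then show "i \<in> snd`T" unfolding T_def using \<open>i \<in> Y\<close> by force
    qed
  qed
  have inj: "inj (\<lambda>x::int. (x,i))" for i by (auto simp: inj_on_def)
  have fstT: "fst`row T i = I (Pn i)" if "i \<in> Y" for i
    using rowT[OF that] by (simp add: image_image)
  have cardT: "card (row T i) = Pn i" if "i \<in> Y" for i
    using rowT[OF that] by (simp add: card_image inj_on_def)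
  have "card T = n"
    using card_rows[OF fT] card_rows[OF fS] cS YT cardT unfolding Y_def Pn_def by simp
  then have "town n T" using fT unfolding town_def by simp
  then have "cost S \<le> cost T" using opt unfolding optimal_def by blast
  then have WST: "W S \<le> W T" unfolding cost_W by simp
  define Xs where "Xs i = fst`row S i" for i
  have cX: "card (Xs i) = Pn i" for i unfolding Xs_def Pn_def by (simp add: card_image inj_fst_row)
  have fX: "finite (Xs i)" for i unfolding Xs_def using fS by simp
  have WS: "W S = (\<Sum>i\<in>Y. \<Sum>j\<in>Y. D (Xs i) (Xs j) + int (Pn i) * int (Pn j) * \<bar>i - j\<bar>)"
    using W_decomp[OF fS] unfolding Y_def Xs_def Pn_def .
  have WT: "W T = (\<Sum>i\<in>Y. \<Sum>j\<in>Y. G (Pn i) (Pn j) + int (Pn i) * int (Pn j) * \<bar>i - j\<bar>)"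
    unfolding W_decomp[OF fT] YT
    by (intro sum.cong refl) (simp add: fstT cardT G_def)
  have "W S - W T = (\<Sum>i\<in>Y. \<Sum>j\<in>Y. D (Xs i) (Xs j) - G (Pn i) (Pn j))"
    unfolding WS WT by (simp add: sum_subtractf[symmetric])
  moreover have nn: "0 \<le> D (Xs i) (Xs j) - G (Pn i) (Pn j)" for i j
    using Q_all[OF fX fX] cX unfolding Q_def by simp
  ultimately have z: "(\<Sum>i\<in>Y. \<Sum>j\<in>Y. D (Xs i) (Xs j) - G (Pn i) (Pn j)) = 0"
    using WST by (smt (verit) sum_nonneg)
  have fY: "finite Y" unfolding Y_def using fS by simp
  have "\<forall>i\<in>Y. (\<Sum>j\<in>Y. D (Xs i) (Xs j) - G (Pn i) (Pn j)) = 0"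
    using z fY nn by (subst sum_nonneg_eq_0_iff[symmetric]) (auto intro: sum_nonneg)
  then have "\<forall>i\<in>Y. \<forall>j\<in>Y. D (Xs i) (Xs j) - G (Pn i) (Pn j) = 0"
    using fY nn by (simp add: sum_nonneg_eq_0_iff)
  then have "D (Xs i) (Xs j) = G (card (Xs i)) (card (Xs j))"
    using i j cX unfolding Y_def by (simp only: cX) (meson eq_iff_diff_eq_0)
  then show ?thesis using Q_all[OF fX fX] unfolding Q_def Xs_def by simp
qed


definition RowP :: "point set \<Rightarrow> real \<Rightarrow> real \<Rightarrow> bool" where
  "RowP S a e \<longleftrightarrow> (\<forall>i. odd (card (row S i)) \<longrightarrow> row_center_x S i = a) \<and>
            (\<forall>i. row S i \<noteq> {} \<and> even (card (row S i)) \<longrightarrow> row_center_x S i = a + e)"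

definition ColP :: "point set \<Rightarrow> real \<Rightarrow> real \<Rightarrow> bool" where
  "ColP S b e \<longleftrightarrow> (\<forall>j. odd (card (col S j)) \<longrightarrow> col_center_y S j = b) \<and>
            (\<forall>j. col S j \<noteq> {} \<and> even (card (col S j)) \<longrightarrow> col_center_y S j = b + e)"

lemma rows_aligned:
  assumes opt: "optimal n S"
  shows "\<exists>a::int. \<exists>e::real\<in>{-1/2, 1/2}. RowP S (real_of_int a) e"
proof -
  have fS: "finite S" using opt unfolding optimal_def town_def by auto
  define Y where "Y = snd`S"
  define s where "s i = Min (fst`row S i) + Max (fst`row S i)" for i
  have inY: "i \<in> Y" if "row S i \<noteq> {}" for i
    using that unfolding Y_def row_def by force
  have ne: "fst`row S i \<noteq> {}" if "i \<in> Y" for i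
    using that unfolding Y_def row_def by force
  have cX: "card (fst`row S i) = card (row S i)" for i by (simp add: card_image inj_fst_row)
  have par: "s i = 2 * Min (fst`row S i) + int (card (row S i)) - 1" if "i \<in> Y" for i
    using rows_tight[OF opt, of i i] that ne[OF that] cX unfolding P_def s_def Y_def by simp
  have close: "\<bar>s i - s j\<bar> \<le> 1" if "i \<in> Y" "j \<in> Y" for i j
    using rows_tight[OF opt, of i j] that ne[OF that(1)] ne[OF that(2)]
    unfolding P_def s_def Y_def by (simp add: algebra_simps)
  have rcx: "row_center_x S i = real_of_int (s i) / 2" for i
    unfolding row_center_x_def s_def by simp
  have oddY: "i \<in> Y" if "odd (card (row S i))" for i
    using that inY by (metis card.empty odd_card_imp_not_empty)
  show ?thesis
  proof (cases "Y = {}")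
    case True
    then show ?thesis unfolding RowP_def using oddY inY by blast
  next
    case False
    have fY: "finite Y" unfolding Y_def using fS by simp
    define c where "c = Min (s`Y)"
    obtain j0 where j0: "j0 \<in> Y" "s j0 = c" unfolding c_def using False fY
      by (metis (mono_tags, lifting) Min_in finite_imageI image_iff image_is_empty)
    have rng: "c \<le> s i \<and> s i \<le> c + 1" if "i \<in> Y" for i
      using that close[OF that j0(1)] j0(2) fY unfolding c_def by auto
    show ?thesis
    proof (cases "even c")
      case True
      then obtain k where k: "c = 2 * k" by (rule evenE)
      show ?thesis
      proof (rule exI[of _ k], rule bexI[of _ "1/2"])
        show "RowP S (real_of_int k) (1/2)"
          unfolding RowP_def
        proof (intro conjI allI impI)
          fix i assume o: "odd (card (row S i))"
          then have iY: "i \<in> Y" by (rule oddY)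
          then have "even (s i)" using par[OF iY] o by simp
          then have "s i \<noteq> c + 1" using True by auto
          then have "s i = 2 * k" using rng[OF iY] k by simp
          then have "real_of_int (s i) / 2 = real_of_int k" by simp
          then show "row_center_x S i = real_of_int k" by (simp only: rcx)
        next
          fix i assume o: "row S i \<noteq> {} \<and> even (card (row S i))"
          then have iY: "i \<in> Y" using inY by blast
          then have "odd (s i)" using par[OF iY] o by simp
          then have "s i \<noteq> c" using True by auto
          then have "s i = 2 * k + 1" using rng[OF iY] k by simp
          then have "real_of_int (s i) / 2 = real_of_int k + 1/2" by simp
          then show "row_center_x S i = real_of_int k + 1/2" by (simp only: rcx)
        qed
      qed simp
    next
      case False
      then obtain k0 where k0: "c = 2 * k0 + 1" by (rule oddE)
      define k where "k = k0 + 1"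
      have k: "c = 2 * k - 1" using k0 k_def by simp
      show ?thesis
      proof (rule exI[of _ k], rule bexI[of _ "-1/2"])
        show "RowP S (real_of_int k) (-1/2)"
          unfolding RowP_def
        proof (intro conjI allI impI)
          fix i assume o: "odd (card (row S i))"
          then have iY: "i \<in> Y" by (rule oddY)
          then have "even (s i)" using par[OF iY] o by simp
          then have "s i \<noteq> c" using False by auto
          then have "s i = 2 * k" using rng[OF iY] k by simp
          then have "real_of_int (s i) / 2 = real_of_int k" by simp
          then show "row_center_x S i = real_of_int k" by (simp only: rcx)
        next
          fix i assume o: "row S i \<noteq> {} \<and> even (card (row S i))"
          then have iY: "i \<in> Y" using inY by blast
          then have "odd (s i)" using par[OF iY] o by simp
          then have "s i \<noteq> c + 1" using False by auto
          then have "s i = 2 * k - 1" using rng[OF iY] k by simp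
          then have "real_of_int (s i) / 2 = real_of_int k + -1/2" by simp
          then show "row_center_x S i = real_of_int k + -1/2" by (simp only: rcx)
        qed
      qed simp
    qed
  qed
qed


lemma cost_image:
  assumes "inj f" "\<And>s t. l1dist (f s) (f t) = l1dist s t"
  shows "cost (f ` S) = cost S"
proof -
  have i: "inj_on f X" for X using inj_on_subset[OF assms(1) subset_UNIV] .
  show ?thesis unfolding cost_def
    by (simp add: sum.reindex[OF i] assms(2))
qed

definition sw :: "point \<Rightarrow> point" where "sw p = (snd p, fst p)"

lemma sw_inj: "inj sw" unfolding sw_def inj_def by (auto simp: prod_eq_iff)
lemma sw_sw[simp]: "sw (sw p) = p" unfolding sw_def by simp
lemma sw_dist: "l1dist (sw s) (sw t) = l1dist s t" unfolding sw_def l1dist_def by simp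

lemma optimal_sw: "optimal n S \<Longrightarrow> optimal n (sw ` S)"
proof -
  assume o: "optimal n S"
  have c: "cost (sw ` X) = cost X" for X by (rule cost_image[OF sw_inj sw_dist])
  have tw: "town n X \<Longrightarrow> town n (sw ` X)" for X
    unfolding town_def using card_image[OF inj_on_subset[OF sw_inj subset_UNIV]] by simp
  have "town n (sw ` S)" using o tw unfolding optimal_def by simp
  moreover have "cost (sw ` S) \<le> cost T" if "town n T" for T
  proof -
    have "cost S \<le> cost (sw ` T)" using o tw[OF that] unfolding optimal_def by blast
    then show ?thesis by (simp add: c)
  qed
  ultimately show ?thesis unfolding optimal_def by blast
qed

lemma row_sw: "row (sw ` S) j = sw ` col S j"
  unfolding row_def col_def sw_def by auto

lemma col_from_sw: "RowP (sw ` S) b e \<Longrightarrow> ColP S b e"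
proof -
  have c: "card (row (sw ` S) j) = card (col S j)" for j
    unfolding row_sw by (rule card_image) (meson inj_on_subset sw_inj subset_UNIV)
  have f: "fst ` row (sw ` S) j = snd ` col S j" for j
    unfolding row_sw by (auto simp: sw_def image_image)
  have r: "row_center_x (sw ` S) j = col_center_y S j" for j
    unfolding row_center_x_def col_center_y_def f ..
  have e: "row (sw ` S) j = {} \<longleftrightarrow> col S j = {}" for j unfolding row_sw by simp
  assume "RowP (sw ` S) b e" then show "ColP S b e"
    unfolding RowP_def ColP_def c r e .
qed

lemma cols_aligned:
  assumes opt: "optimal n S"
  shows "\<exists>b::int. \<exists>e::real\<in>{-1/2, 1/2}. ColP S (real_of_int b) e"
  using rows_aligned[OF optimal_sw[OF opt]] col_from_sw by blast

lemma rot_inj: "inj rot90" unfolding rot90_def inj_def by (auto simp: prod_eq_iff)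
lemma rot_dist: "l1dist (rot90 s) (rot90 t) = l1dist s t" unfolding rot90_def l1dist_def by simp

lemma rot_step:
  assumes fS: "finite S" and R: "RowP S a e1" and C: "ColP S b e2"
  shows "RowP (rot90 ` S) (-b) (-e2) \<and> ColP (rot90 ` S) a e1"
proof -
  have injX: "inj_on rot90 X" for X by (meson inj_on_subset rot_inj subset_UNIV)
  have rowr: "row (rot90 ` S) i = rot90 ` col S i" for i
    unfolding row_def col_def rot90_def by force
  have colr: "col (rot90 ` S) j = rot90 ` row S (-j)" for j
    unfolding row_def col_def rot90_def by force
  have fc: "finite (col S i)" for i unfolding col_def using fS by simp
  have cr: "card (row (rot90 ` S) i) = card (col S i)" for i
    unfolding rowr by (rule card_image[OF injX])
  have cc: "card (col (rot90 ` S) j) = card (row S (-j))" for j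
    unfolding colr by (rule card_image[OF injX])
  have rcx: "row_center_x (rot90 ` S) i = - col_center_y S i" if "col S i \<noteq> {}" for i
  proof -
    have f: "fst ` row (rot90 ` S) i = uminus ` snd ` col S i"
      unfolding rowr by (auto simp: rot90_def image_image)
    have "finite (snd ` col S i)" "snd ` col S i \<noteq> {}" using fc that by auto
    then have m1: "Min (uminus ` snd ` col S i) = - Max (snd ` col S i)"
      and m2: "Max (uminus ` snd ` col S i) = - Min (snd ` col S i)" by simp_all
    show ?thesis unfolding row_center_x_def col_center_y_def f m1 m2 by (simp add: field_simps)
  qed
  have ccy: "col_center_y (rot90 ` S) j = row_center_x S (-j)" for j
  proof -
    have f: "snd ` col (rot90 ` S) j = fst ` row S (-j)"
      unfolding colr by (auto simp: rot90_def image_image)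
    show ?thesis unfolding row_center_x_def col_center_y_def f ..
  qed
  have ner: "row (rot90 ` S) i \<noteq> {} \<longleftrightarrow> col S i \<noteq> {}" for i unfolding rowr by simp
  have nec: "col (rot90 ` S) j \<noteq> {} \<longleftrightarrow> row S (-j) \<noteq> {}" for j unfolding colr by simp
  have R1: "RowP (rot90 ` S) (-b) (-e2)"
    unfolding RowP_def
  proof (intro conjI allI impI)
    fix i assume "odd (card (row (rot90 ` S) i))"
    then have o: "odd (card (col S i))" and "col S i \<noteq> {}" using cr by (auto simp: cr)
    then show "row_center_x (rot90 ` S) i = - b" using rcx C unfolding ColP_def by simp
  next
    fix i assume "row (rot90 ` S) i \<noteq> {} \<and> even (card (row (rot90 ` S) i))"
    then have o: "even (card (col S i))" and ne: "col S i \<noteq> {}" using cr ner by auto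
    then show "row_center_x (rot90 ` S) i = - b + - e2" using rcx C unfolding ColP_def by simp
  qed
  have C1: "ColP (rot90 ` S) a e1"
    unfolding ColP_def
  proof (intro conjI allI impI)
    fix j assume "odd (card (col (rot90 ` S) j))"
    then show "col_center_y (rot90 ` S) j = a" using ccy R cc unfolding RowP_def by simp
  next
    fix j assume "col (rot90 ` S) j \<noteq> {} \<and> even (card (col (rot90 ` S) j))"
    then show "col_center_y (rot90 ` S) j = a + e1" using ccy R cc nec unfolding RowP_def by simp
  qed
  show ?thesis using R1 C1 by simp
qed


definition tr :: "int \<Rightarrow> int \<Rightarrow> point \<Rightarrow> point" where "tr u v p = (fst p + u, snd p + v)"

lemma tr_inj: "inj (tr u v)" unfolding tr_def inj_def by (auto simp: prod_eq_iff)
lemma tr_dist: "l1dist (tr u v s) (tr u v t) = l1dist s t" unfolding tr_def l1dist_def by simp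

lemma tr_step:
  assumes fS: "finite S" and R: "RowP S a e1" and C: "ColP S b e2"
  shows "RowP (tr u v ` S) (a + u) e1 \<and> ColP (tr u v ` S) (b + v) e2"
proof -
  have injX: "inj_on (tr u v) X" for X by (meson inj_on_subset tr_inj subset_UNIV)
  have rowr: "row (tr u v ` S) i = tr u v ` row S (i - v)" for i
    unfolding row_def tr_def by force
  have colr: "col (tr u v ` S) j = tr u v ` col S (j - u)" for j
    unfolding col_def tr_def by force
  have fc: "finite (col S i)" for i unfolding col_def using fS by simp
  have cr: "card (row (tr u v ` S) i) = card (row S (i - v))" for i
    unfolding rowr by (rule card_image[OF injX])
  have cc: "card (col (tr u v ` S) j) = card (col S (j - u))" for j
    unfolding colr by (rule card_image[OF injX])
  have mono: "mono (\<lambda>x::int. x + c)" for c by (simp add: mono_def)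
  have rcx: "row_center_x (tr u v ` S) i = row_center_x S (i - v) + u" if "row S (i - v) \<noteq> {}" for i
  proof -
    have f: "fst ` row (tr u v ` S) i = (\<lambda>x. x + u) ` fst ` row S (i - v)"
      unfolding rowr by (auto simp: tr_def image_image)
    have "finite (fst ` row S (i - v))" "fst ` row S (i - v) \<noteq> {}" using fS that by auto
    then show ?thesis unfolding row_center_x_def f
      by (simp add: mono_Min_commute[OF mono, symmetric] mono_Max_commute[OF mono, symmetric])
  qed
  have ccy: "col_center_y (tr u v ` S) j = col_center_y S (j - u) + v" if "col S (j - u) \<noteq> {}" for j
  proof -
    have f: "snd ` col (tr u v ` S) j = (\<lambda>x. x + v) ` snd ` col S (j - u)"
      unfolding colr by (auto simp: tr_def image_image)
    have "finite (snd ` col S (j - u))" "snd ` col S (j - u) \<noteq> {}" using fc that by auto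
    then show ?thesis unfolding col_center_y_def f
      by (simp add: mono_Min_commute[OF mono, symmetric] mono_Max_commute[OF mono, symmetric])
  qed
  have ner: "row (tr u v ` S) i \<noteq> {} \<longleftrightarrow> row S (i - v) \<noteq> {}" for i unfolding rowr by simp
  have nec: "col (tr u v ` S) j \<noteq> {} \<longleftrightarrow> col S (j - u) \<noteq> {}" for j unfolding colr by simp
  have oddne: "odd (card X) \<Longrightarrow> X \<noteq> {}" for X :: "point set" by auto
  have R1: "RowP (tr u v ` S) (a + u) e1"
    unfolding RowP_def
  proof (intro conjI allI impI)
    fix i assume "odd (card (row (tr u v ` S) i))"
    then have o: "odd (card (row S (i - v)))" and "row S (i - v) \<noteq> {}" using cr oddne by auto
    then show "row_center_x (tr u v ` S) i = a + u" using rcx R unfolding RowP_def by simp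
  next
    fix i assume "row (tr u v ` S) i \<noteq> {} \<and> even (card (row (tr u v ` S) i))"
    then have o: "even (card (row S (i - v)))" and "row S (i - v) \<noteq> {}" using cr ner by auto
    then show "row_center_x (tr u v ` S) i = a + u + e1" using rcx R unfolding RowP_def by simp
  qed
  have C1: "ColP (tr u v ` S) (b + v) e2"
    unfolding ColP_def
  proof (intro conjI allI impI)
    fix j assume "odd (card (col (tr u v ` S) j))"
    then have o: "odd (card (col S (j - u)))" and "col S (j - u) \<noteq> {}" using cc oddne by auto
    then show "col_center_y (tr u v ` S) j = b + v" using ccy C unfolding ColP_def by simp
  next
    fix j assume "col (tr u v ` S) j \<noteq> {} \<and> even (card (col (tr u v ` S) j))"
    then have o: "even (card (col S (j - u)))" and "col S (j - u) \<noteq> {}" using cc nec by auto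
    then show "col_center_y (tr u v ` S) j = b + v + e2" using ccy C unfolding ColP_def by simp
  qed
  show ?thesis using R1 C1 by simp
qed


lemma rotk: "(rot90 ^^ Suc k) ` S = rot90 ` (rot90 ^^ k) ` S"
  by (simp add: image_comp)

lemma cost_rotk: "cost ((rot90 ^^ k) ` S) = cost S"
proof (induction k)
  case (Suc k)
  then show ?case unfolding rotk by (simp only: cost_image[OF rot_inj rot_dist])
qed simp

lemma normalize_rot:
  assumes fS: "finite S" and R: "RowP S (real_of_int a) e1" and C: "ColP S (real_of_int b) e2"
    and e1: "e1 \<in> {-1/2, 1/2}" and e2: "e2 \<in> {-1/2, 1/2}"
  shows "\<exists>k a' b'. RowP ((rot90 ^^ k) ` S) (real_of_int a') (-1/2) \<and>
                   ColP ((rot90 ^^ k) ` S) (real_of_int b') (-1/2)"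
proof -
  have f: "finite ((rot90 ^^ k) ` S)" for k using fS by simp
  have st: "RowP ((rot90 ^^ Suc k) ` S) (-b') (-e2') \<and> ColP ((rot90 ^^ Suc k) ` S) a' e1'"
    if "RowP ((rot90 ^^ k) ` S) a' e1'" "ColP ((rot90 ^^ k) ` S) b' e2'" for k a' b' e1' e2'
    unfolding rotk using rot_step[OF f that] .
  consider "e1 = -1/2" "e2 = -1/2" | "e1 = -1/2" "e2 = 1/2" | "e1 = 1/2" "e2 = 1/2" | "e1 = 1/2" "e2 = -1/2"
    using e1 e2 by auto
  then show ?thesis
  proof cases
    case 1
    then show ?thesis using R C by (intro exI[of _ 0] exI[of _ a] exI[of _ b]) simp
  next
    case 2
    have R0: "RowP ((rot90 ^^ 0) ` S) (real_of_int a) e1" "ColP ((rot90 ^^ 0) ` S) (real_of_int b) e2"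
      using R C by simp_all
    from st[OF R0] 2 show ?thesis
      by (intro exI[of _ 1] exI[of _ "-b"] exI[of _ a]) simp
  next
    case 3
    have R0: "RowP ((rot90 ^^ 0) ` S) (real_of_int a) e1" "ColP ((rot90 ^^ 0) ` S) (real_of_int b) e2"
      using R C by simp_all
    note s1 = st[OF R0]
    note s2 = st[OF s1[THEN conjunct1] s1[THEN conjunct2]]
    from s2 3 show ?thesis
      by (intro exI[of _ 2] exI[of _ "-a"] exI[of _ "-b"]) (simp add: numeral_2_eq_2)
  next
    case 4
    have R0: "RowP ((rot90 ^^ 0) ` S) (real_of_int a) e1" "ColP ((rot90 ^^ 0) ` S) (real_of_int b) e2"
      using R C by simp_all
    note s1 = st[OF R0]
    note s2 = st[OF s1[THEN conjunct1] s1[THEN conjunct2]]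
    note s3 = st[OF s2[THEN conjunct1] s2[THEN conjunct2]]
    from s3 4 show ?thesis
      by (intro exI[of _ 3] exI[of _ "b"] exI[of _ "-a"]) (simp add: numeral_3_eq_3)
  qed
qed

theorem lemma3:
  assumes "optimal n S"
  shows "(\<exists>a::int. \<exists>e::real\<in>{-1/2, 1/2}.
            (\<forall>i. odd (card (row S i)) \<longrightarrow> row_center_x S i = real_of_int a) \<and>
            (\<forall>i. row S i \<noteq> {} \<and> even (card (row S i)) \<longrightarrow> row_center_x S i = real_of_int a + e)) \<and>
         (\<exists>b::int. \<exists>e::real\<in>{-1/2, 1/2}.
            (\<forall>j. odd (card (col S j)) \<longrightarrow> col_center_y S j = real_of_int b) \<and>
            (\<forall>j. col S j \<noteq> {} \<and> even (card (col S j)) \<longrightarrow> col_center_y S j = real_of_int b + e)) \<and>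
         (\<exists>k::nat. \<exists>u v::int.
            (let S' = (\<lambda>p. (fst ((rot90 ^^ k) p) + u, snd ((rot90 ^^ k) p) + v)) ` S in
              cost S' = cost S \<and>
              (\<forall>i. odd (card (row S' i)) \<longrightarrow> row_center_x S' i = 0) \<and>
              (\<forall>i. row S' i \<noteq> {} \<and> even (card (row S' i)) \<longrightarrow> row_center_x S' i = -1/2) \<and>
              (\<forall>j. odd (card (col S' j)) \<longrightarrow> col_center_y S' j = 0) \<and>
              (\<forall>j. col S' j \<noteq> {} \<and> even (card (col S' j)) \<longrightarrow> col_center_y S' j = -1/2)))"
proof -
  have fS: "finite S" using assms unfolding optimal_def town_def by auto
  obtain a e1 where e1: "e1 \<in> {-1/2, 1/2}" and R: "RowP S (real_of_int a) e1"
    using rows_aligned[OF assms] by blast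
  obtain b e2 where e2: "e2 \<in> {-1/2, 1/2}" and C: "ColP S (real_of_int b) e2"
    using cols_aligned[OF assms] by blast
  obtain k a' b' where R': "RowP ((rot90 ^^ k) ` S) (real_of_int a') (-1/2)"
    and C': "ColP ((rot90 ^^ k) ` S) (real_of_int b') (-1/2)"
    using normalize_rot[OF fS R C e1 e2] by blast
  have T: "RowP (tr (-a') (-b') ` (rot90 ^^ k) ` S) 0 (-1/2) \<and> ColP (tr (-a') (-b') ` (rot90 ^^ k) ` S) 0 (-1/2)"
    using tr_step[OF _ R' C', of "-a'" "-b'"] fS by simp
  have eqS: "(\<lambda>p. (fst ((rot90 ^^ k) p) + (-a'), snd ((rot90 ^^ k) p) + (-b'))) ` S
      = tr (-a') (-b') ` (rot90 ^^ k) ` S"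
    by (simp add: image_comp tr_def o_def)
  have cS: "cost (tr (-a') (-b') ` (rot90 ^^ k) ` S) = cost S"
    by (simp add: cost_image[OF tr_inj tr_dist] cost_rotk)
  have part3: "\<exists>k::nat. \<exists>u v::int.
            (let S' = (\<lambda>p. (fst ((rot90 ^^ k) p) + u, snd ((rot90 ^^ k) p) + v)) ` S in
              cost S' = cost S \<and>
              (\<forall>i. odd (card (row S' i)) \<longrightarrow> row_center_x S' i = 0) \<and>
              (\<forall>i. row S' i \<noteq> {} \<and> even (card (row S' i)) \<longrightarrow> row_center_x S' i = -1/2) \<and>
              (\<forall>j. odd (card (col S' j)) \<longrightarrow> col_center_y S' j = 0) \<and>
              (\<forall>j. col S' j \<noteq> {} \<and> even (card (col S' j)) \<longrightarrow> col_center_y S' j = -1/2))"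
    apply (rule exI[of _ k], rule exI[of _ "-a'"], rule exI[of _ "-b'"])
    unfolding Let_def eqS using T cS unfolding RowP_def ColP_def by simp
  show ?thesis using R C e1 e2 part3 unfolding RowP_def ColP_def by blast
qed

end
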